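(* Let $\mathcal H$ be a real Hilbert space. Let $\Psi: \mathcal H \to \mathbb R \cup \{+\infty\}$ be proper, lower-semicontinuous and convex, and let $\Phi: \mathcal H \to \mathbb R$ be convex and continuously differentiable with $L$-Lipschitz continuous gradient; set $\Theta=\Psi+\Phi$ and suppose $\operatorname{argmin}\Theta\neq\emptyset$. Let $\alpha>3$ and $0<s<\frac1L$, and let $(x_k)$ be generated by: given arbitrary $x_0,x_1\in\mathcal H$, for $k\ge1$, $$y_k = x_k + \frac{k-1}{k+\alpha-1}(x_k-x_{k-1}),\qquad x_{k+1} = \operatorname{prox}_{s\Psi}\big(y_k - s\nabla\Phi(y_k)\big).$$ Let $x^*\in\operatorname{argmin}\Theta$. Then the limit $$\lim_{k\to\infty}\Big[k^2\|x_{k+1}-x_k\|^2 + (k+1)^2\big(\Theta(x_{k+1})-\Theta(x^* )\big)\Big]$$ exists.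
   Context: $\operatorname{prox}_{s\Psi}(z) = \operatorname{argmin}_{u\in\mathcal H}\{\Psi(u) + \frac{1}{2s}\|u-z\|^2\}$ denotes the proximal operator. *)

theory Defs
  imports "HOL-Analysis.Analysis" "HOL-Library.Extended_Real"
begin

definition proper_fun :: "('a \<Rightarrow> ereal) \<Rightarrow> bool" where
  "proper_fun f \<longleftrightarrow> (\<forall>x. f x \<noteq> -\<infinity>) \<and> (\<exists>x. f x \<noteq> \<infinity>)"

definition lsc_fun :: "('a::topological_space \<Rightarrow> ereal) \<Rightarrow> bool" where
  "lsc_fun f \<longleftrightarrow> (\<forall>x. \<forall>c < f x. eventually (\<lambda>y. c < f y) (at x))"

definition convex_ereal_fun :: "('a::real_vector \<Rightarrow> ereal) \<Rightarrow> bool" where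
  "convex_ereal_fun f \<longleftrightarrow>
     (\<forall>x y. \<forall>t\<in>{0..1::real}.
        f ((1 - t) *\<^sub>R x + t *\<^sub>R y) \<le> ereal (1 - t) * f x + ereal t * f y)"

definition is_prox :: "real \<Rightarrow> ('a::real_normed_vector \<Rightarrow> ereal) \<Rightarrow> 'a \<Rightarrow> 'a \<Rightarrow> bool" where
  "is_prox s \<Psi> z u \<longleftrightarrow>
     (\<forall>v. \<Psi> u + ereal (norm (u - z) ^ 2 / (2 * s)) \<le> \<Psi> v + ereal (norm (v - z) ^ 2 / (2 * s)))"

end

theory Submission
  imports Defs
begin

lemma grad_ineq:
  fixes \<Phi> :: "'a::real_inner \<Rightarrow> real"
  assumes cv: "convex_on UNIV \<Phi>" and gr: "\<And>z. (\<Phi> has_derivative (\<lambda>h. g z \<bullet> h)) (at z)"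
  shows "\<Phi> y + g y \<bullet> (v - y) \<le> \<Phi> v"
proof -
  define f where "f t = \<Phi> (y + t *\<^sub>R (v - y))" for t :: real
  have cf: "convex_on UNIV f"
    unfolding convex_on_def
  proof (intro conjI ballI allI impI)
    fix a b :: real and u w :: real
    assume h: "0 \<le> u" "0 \<le> w" "u + w = 1"
    have "y + (u * a + w * b) *\<^sub>R (v - y) = u *\<^sub>R (y + a *\<^sub>R (v - y)) + w *\<^sub>R (y + b *\<^sub>R (v - y))"
      using h by (simp add: algebra_simps scaleR_add_left[symmetric] del: scaleR_add_left)
    then show "f (u *\<^sub>R a + w *\<^sub>R b) \<le> u * f a + w * f b"
      using cv h unfolding f_def convex_on_def by simp
  qed simp
  have d: "((\<lambda>t. y + t *\<^sub>R (v - y)) has_derivative (\<lambda>t. t *\<^sub>R (v - y))) (at 0)"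
    by (auto intro!: derivative_eq_intros)
  have "(f has_derivative (\<lambda>t. g (y + 0 *\<^sub>R (v - y)) \<bullet> (t *\<^sub>R (v - y)))) (at 0)"
    unfolding f_def using has_derivative_compose[OF d gr] by (simp add: o_def)
  moreover have "(\<lambda>t. g (y + 0 *\<^sub>R (v - y)) \<bullet> (t *\<^sub>R (v - y))) = (*) (g y \<bullet> (v - y))"
    by (rule ext) simp
  ultimately have "(f has_field_derivative (g y \<bullet> (v - y))) (at 0)"
    by (simp add: has_field_derivative_def)
  from convex_on_imp_above_tangent[OF cf, of 0 1 "g y \<bullet> (v - y)"] this
  show ?thesis by (simp add: f_def)
qed

lemma descent_n:
  fixes \<Phi> :: "'a::real_inner \<Rightarrow> real"
  assumes cv: "convex_on UNIV \<Phi>" and gr: "\<And>z. (\<Phi> has_derivative (\<lambda>h. g z \<bullet> h)) (at z)"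
    and lip: "\<And>u v. norm (g u - g v) \<le> L * norm (u - v)"
  shows "\<Phi> (y + h) \<le> \<Phi> y + g y \<bullet> h + (L/2 + L/2^(Suc n)) * (norm h)^2"
proof (induction n arbitrary: y h)
  case 0
  have "\<Phi> (y + h) + g (y + h) \<bullet> (y - (y + h)) \<le> \<Phi> y" by (rule grad_ineq[OF cv gr])
  moreover have "(g (y + h) - g y) \<bullet> h \<le> L * (norm h)^2"
  proof -
    have "(g (y + h) - g y) \<bullet> h \<le> norm (g (y + h) - g y) * norm h" by (rule norm_cauchy_schwarz)
    also have "\<dots> \<le> L * norm h * norm h" using lip[of "y+h" y] by (simp add: mult_right_mono)
    finally show ?thesis by (simp add: power2_eq_square mult.assoc)
  qed
  ultimately show ?case by (simp add: inner_diff_left inner_diff_right)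
next
  case (Suc n)
  define h' where "h' = (1/2::real) *\<^sub>R h"
  define c where "c = L/2 + L/2^(Suc n)"
  have hh: "h = h' + h'" unfolding h'_def by (simp add: scaleR_2[symmetric])
  have 1: "\<Phi> (y + h') \<le> \<Phi> y + g y \<bullet> h' + c * (norm h')^2" using Suc unfolding c_def .
  have 2: "\<Phi> ((y + h') + h') \<le> \<Phi> (y + h') + g (y + h') \<bullet> h' + c * (norm h')^2" using Suc unfolding c_def .
  have 3: "(g (y + h') - g y) \<bullet> h' \<le> L * (norm h')^2"
  proof -
    have "(g (y + h') - g y) \<bullet> h' \<le> norm (g (y + h') - g y) * norm h'" by (rule norm_cauchy_schwarz)
    also have "\<dots> \<le> L * norm h' * norm h'" using lip[of "y+h'" y] by (simp add: mult_right_mono)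
    finally show ?thesis by (simp add: power2_eq_square mult.assoc)
  qed
  have n4: "(norm h')^2 = (norm h)^2 / 4" unfolding h'_def by (simp add: power2_eq_square)
  have "\<Phi> (y + h) \<le> \<Phi> y + g y \<bullet> h + (2*c + L) * (norm h')^2"
    using 1 2 3 hh by (simp add: inner_diff_left inner_add_right add.assoc algebra_simps)
  also have "(2*c + L) * (norm h')^2 = (L/2 + L/2^(Suc (Suc n))) * (norm h)^2"
    unfolding n4 c_def by (simp add: field_simps)
  finally show ?case .
qed

lemma descent:
  fixes \<Phi> :: "'a::real_inner \<Rightarrow> real"
  assumes cv: "convex_on UNIV \<Phi>" and gr: "\<And>z. (\<Phi> has_derivative (\<lambda>h. g z \<bullet> h)) (at z)"
    and lip: "\<And>u v. norm (g u - g v) \<le> L * norm (u - v)"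
    and L: "L > 0" and s: "0 < s" "s < 1 / L"
  shows "\<Phi> u \<le> \<Phi> y + g y \<bullet> (u - y) + (norm (u - y))^2 / (2 * s)"
proof -
  have "1/s - L > 0" using s L by (simp add: field_simps)
  then have "(1/s - L)/L > 0" using L by simp
  from real_arch_pow_inv[OF this, of "1/2"] obtain n where n: "(1/2::real)^n < (1/s - L)/L" by auto
  have "L/2^(Suc n) = L/2 * (1/2)^n" by (simp add: power_divide)
  also have "\<dots> \<le> L/2 * ((1/s - L)/L)" using n L by (intro mult_left_mono) auto
  also have "\<dots> = (1/s - L)/2" using L by simp
  finally have c: "L/2 + L/2^(Suc n) \<le> 1 / (2 * s)"
    by simp
  have "\<Phi> (y + (u - y)) \<le> \<Phi> y + g y \<bullet> (u - y) + (L/2 + L/2^(Suc n)) * (norm (u - y))^2"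
    by (rule descent_n[OF cv gr lip])
  also have "\<dots> \<le> \<Phi> y + g y \<bullet> (u - y) + 1/(2 * s) * (norm (u - y))^2"
    using c by (intro add_left_mono mult_right_mono) auto
  finally show ?thesis by simp
qed


lemma prox_fin:
  assumes pr: "proper_fun \<Psi>" and p: "is_prox s \<Psi> z u"
  shows "\<Psi> u \<noteq> \<infinity>"
proof
  assume inf: "\<Psi> u = \<infinity>"
  from pr obtain v where v: "\<Psi> v \<noteq> \<infinity>" unfolding proper_fun_def by auto
  have "\<Psi> v \<noteq> -\<infinity>" using pr unfolding proper_fun_def by auto
  with v obtain r where "\<Psi> v = ereal r" by (cases "\<Psi> v") auto
  with p[unfolded is_prox_def, rule_format, of v] inf show False by simp
qed

lemma small_le0:
  fixes a c :: real
  assumes "\<And>t. 0 < t \<Longrightarrow> t \<le> 1 \<Longrightarrow> a \<le> t * c"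
  shows "a \<le> 0"
proof (rule ccontr)
  assume a: "\<not> a \<le> 0"
  have c: "c > 0" using assms[of 1] a by simp
  define t where "t = min 1 (a / (2 * c))"
  have t: "0 < t" "t \<le> 1" using a c by (auto simp: t_def)
  have "t * c \<le> a / (2 * c) * c" using c by (intro mult_right_mono) (auto simp: t_def)
  also have "\<dots> = a / 2" using c by simp
  finally show False using assms[OF t] a by simp
qed

lemma prox_ineq:
  fixes \<Psi> :: "'a::real_inner \<Rightarrow> ereal"
  assumes pr: "proper_fun \<Psi>" and cv: "convex_ereal_fun \<Psi>" and s: "s > 0"
    and p: "is_prox s \<Psi> z u" and v: "\<Psi> v \<noteq> \<infinity>"
  shows "real_of_ereal (\<Psi> u) \<le> real_of_ereal (\<Psi> v) + ((u - z) \<bullet> (v - u)) / s"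
proof -
  have ninf: "\<And>w. \<Psi> w \<noteq> -\<infinity>" using pr unfolding proper_fun_def by auto
  obtain pu where pu: "\<Psi> u = ereal pu" using prox_fin[OF pr p] ninf[of u] by (cases "\<Psi> u") auto
  obtain pv where pv: "\<Psi> v = ereal pv" using v ninf[of v] by (cases "\<Psi> v") auto
  have key: "pu - pv - ((u - z) \<bullet> (v - u)) / s \<le> t * ((norm (v - u))^2 / (2 * s))"
    if t: "0 < t" "t \<le> 1" for t
  proof -
    define w where "w = (1 - t) *\<^sub>R u + t *\<^sub>R v"
    have cw: "\<Psi> w \<le> ereal (1 - t) * \<Psi> u + ereal t * \<Psi> v"
      using cv t unfolding convex_ereal_fun_def w_def by auto
    then have cw': "\<Psi> w \<le> ereal ((1 - t) * pu + t * pv)" by (simp add: pu pv)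
    then obtain pw where pw: "\<Psi> w = ereal pw" using ninf[of w] by (cases "\<Psi> w") auto
    have c1: "pw \<le> (1 - t) * pu + t * pv" using cw' pw by simp
    have c2: "pu + (norm (u - z))^2 / (2 * s) \<le> pw + (norm (w - z))^2 / (2 * s)"
      using p[unfolded is_prox_def, rule_format, of w] pu pw by simp
    have wz: "w - z = (u - z) + t *\<^sub>R (v - u)" unfolding w_def by (simp add: algebra_simps)
    have nw: "(norm (w - z))^2 = (norm (u - z))^2 + 2 * t * ((u - z) \<bullet> (v - u)) + t^2 * (norm (v - u))^2"
      unfolding wz power2_norm_eq_inner
      by (simp add: inner_add_left inner_add_right inner_commute power2_eq_square algebra_simps)
    have "t * pu \<le> t * pv + (2 * t * ((u - z) \<bullet> (v - u)) + t^2 * (norm (v - u))^2) / (2 * s)"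
    proof -
      have gen: "\<And>N1 N2 ip. pu + N1 / (2 * s) \<le> pw + (N1 + 2 * t * ip + t^2 * N2) / (2 * s) \<Longrightarrow>
          t * pu \<le> t * pv + (2 * t * ip + t^2 * N2) / (2 * s)"
        using c1 s by (simp add: add_divide_distrib algebra_simps)
      show ?thesis by (rule gen) (use c2 nw in simp)
    qed
    then have "t * (pu - pv - ((u - z) \<bullet> (v - u)) / s) \<le> t * (t * ((norm (v - u))^2 / (2 * s)))"
    proof -
      have gen2: "\<And>N ip. t * pu \<le> t * pv + (2 * t * ip + t^2 * N) / (2 * s) \<Longrightarrow>
          t * (pu - pv - ip / s) \<le> t * (t * (N / (2 * s)))"
      proof -
        fix N ip assume h: "t * pu \<le> t * pv + (2 * t * ip + t^2 * N) / (2 * s)"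
        have "(2 * t * ip + t^2 * N) / (2 * s) = t * (ip / s) + t * (t * (N / (2 * s)))"
          using s by (simp add: field_simps power2_eq_square)
        with h show "t * (pu - pv - ip / s) \<le> t * (t * (N / (2 * s)))"
          by (simp add: right_diff_distrib)
      qed
      show ?thesis by (rule gen2) fact
    qed
    then show ?thesis using mult_le_cancel_left_pos[OF t(1)] by blast
  qed
  have "pu - pv - ((u - z) \<bullet> (v - u)) / s \<le> 0" by (rule small_le0) (rule key)
  then show ?thesis by (simp add: pu pv)
qed


lemma step_ineq:
  fixes \<Psi> :: "'a::real_inner \<Rightarrow> ereal" and \<Phi> :: "'a \<Rightarrow> real"
  assumes pr: "proper_fun \<Psi>" and cv: "convex_ereal_fun \<Psi>"
    and cP: "convex_on UNIV \<Phi>" and gr: "\<And>z. (\<Phi> has_derivative (\<lambda>h. g z \<bullet> h)) (at z)"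
    and lip: "\<And>u v. norm (g u - g v) \<le> L * norm (u - v)"
    and L: "L > 0" and s: "0 < s" "s < 1 / L"
    and p: "is_prox s \<Psi> (y - s *\<^sub>R g y) u" and v: "\<Psi> v \<noteq> \<infinity>"
  shows "real_of_ereal (\<Psi> u) + \<Phi> u \<le> real_of_ereal (\<Psi> v) + \<Phi> v
           + ((y - u) \<bullet> (u - v)) / s + (norm (y - u))^2 / (2 * s)"
proof -
  have 1: "real_of_ereal (\<Psi> u) \<le> real_of_ereal (\<Psi> v) + ((u - (y - s *\<^sub>R g y)) \<bullet> (v - u)) / s"
    by (rule prox_ineq[OF pr cv s(1) p v])
  have 2: "\<Phi> u \<le> \<Phi> y + g y \<bullet> (u - y) + (norm (u - y))^2 / (2 * s)"
    by (rule descent[OF cP gr lip L s])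
  have 3: "\<Phi> y + g y \<bullet> (v - y) \<le> \<Phi> v" by (rule grad_ineq[OF cP gr])
  have e: "((u - (y - s *\<^sub>R g y)) \<bullet> (v - u)) / s = ((y - u) \<bullet> (u - v)) / s + g y \<bullet> (v - u)"
    using s by (simp add: inner_diff_left inner_diff_right inner_add_left field_simps)
  have e2: "g y \<bullet> (v - u) + g y \<bullet> (u - y) = g y \<bullet> (v - y)"
    by (simp add: inner_diff_right)
  have e3: "(norm (u - y))^2 / (2 * s) = (norm (y - u))^2 / (2 * s)" by (simp add: norm_minus_commute)
  show ?thesis using 1 2 3 e e2 e3 by linarith
qed


lemma tail0:
  fixes G :: "nat \<Rightarrow> real"
  assumes nn: "\<And>n. G n \<ge> 0" and dec: "\<And>n. G (Suc n) \<le> G n"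
    and sm: "summable (\<lambda>n. real n * G n)"
  shows "(\<lambda>n. (real n)^2 * G n) \<longlonglongrightarrow> 0"
proof (rule LIMSEQ_I)
  fix r :: real assume r: "0 < r"
  have ds: "decseq G" by (rule decseq_SucI) (rule dec)
  from sm[unfolded summable_Cauchy] r obtain N where
    N: "\<And>m n. m \<ge> N \<Longrightarrow> norm (\<Sum>j=m..<n. real j * G j) < r / 8"
    by (metis divide_pos_pos zero_less_numeral)
  show "\<exists>no. \<forall>n\<ge>no. norm ((real n)^2 * G n - 0) < r"
  proof (intro exI allI impI)
    fix n assume n: "n \<ge> 2 * N + 2"
    define m where "m = n div 2"
    have mN: "m \<ge> N" using n unfolding m_def by linarith
    have mn: "m \<le> n" unfolding m_def by simp
    have lb: "(\<Sum>j=m..<n. real m * G n) \<le> (\<Sum>j=m..<n. real j * G j)"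
    proof (rule sum_mono)
      fix j assume j: "j \<in> {m..<n}"
      have "G n \<le> G j" using ds j unfolding decseq_def by auto
      then show "real m * G n \<le> real j * G j"
        using j nn[of n] by (intro mult_mono) auto
    qed
    have sumc: "(\<Sum>j=m..<n. real m * G n) = real (n - m) * (real m * G n)" by simp
    have a1: "n \<le> 2*m+1" "2*m \<le> n" unfolding m_def by presburger+
    have b1: "real n \<le> 2 * real m + 1" proof -
      have "real n \<le> real (2*m+1)" using a1(1) by (simp only: of_nat_le_iff)
      then show ?thesis by simp
    qed
    have b2: "2 * real m \<le> real n" proof -
      have "real (2*m) \<le> real n" using a1(2) by (simp only: of_nat_le_iff)
      then show ?thesis by simp
    qed
    have r1: "real m \<ge> (real n - 1) / 2" using b1 by (simp add: divide_le_eq)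
    have r2: "real (n - m) \<ge> real n / 2" using mn b2 by (simp add: of_nat_diff)
    have n2: "real n \<ge> 2" using n by simp
    have "(real n)^2 \<le> 8 * (real (n - m) * real m)"
    proof -
      have "real (n - m) * real m \<ge> (real n / 2) * ((real n - 1) / 2)"
        using r1 r2 n2 by (intro mult_mono) auto
      moreover have "(real n / 2) * ((real n - 1) / 2) * 8 \<ge> (real n)^2"
        using n2 by (simp add: power2_eq_square field_simps)
      ultimately show ?thesis by linarith
    qed
    then have "(real n)^2 * G n \<le> 8 * (real (n - m) * real m) * G n"
      using nn[of n] by (rule mult_right_mono)
    also have "\<dots> = 8 * (\<Sum>j=m..<n. real m * G n)" using sumc by simp
    also have "\<dots> \<le> 8 * (\<Sum>j=m..<n. real j * G j)" using lb by simp
    also have "\<dots> < r"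
    proof -
      have "(\<Sum>j=m..<n. real j * G j) < r / 8" using N[OF mN, of n] by simp
      then show ?thesis by simp
    qed
    finally show "norm ((real n)^2 * G n - 0) < r" using nn[of n] by simp
  qed
qed


lemma seq_core:
  fixes w D E :: "nat \<Rightarrow> real" and \<alpha> :: real
  assumes al: "\<alpha> > 3"
    and wn: "\<And>k. k \<ge> 2 \<Longrightarrow> w k \<ge> 0"
    and Dn: "\<And>k. k \<ge> 2 \<Longrightarrow> D k \<ge> 0"
    and En: "\<And>k. k \<ge> 2 \<Longrightarrow> E k \<ge> 0"
    and A: "\<And>k. k \<ge> 2 \<Longrightarrow> w (Suc k) + D (Suc k) \<le> w k + ((real k - 1) / (real k + \<alpha> - 1))^2 * D k"
    and Es: "\<And>k. k \<ge> 2 \<Longrightarrow> E (Suc k) + (\<alpha> - 3) / (\<alpha> - 1)^2 * real k * w k \<le> E k"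
  shows "(\<lambda>n. (real n + 2)^2 * (w (n+2) + D (n+2))) \<longlonglongrightarrow> 0"
proof -
  define \<delta> where "\<delta> = (\<alpha> - 3) / (\<alpha> - 1)^2"
  have \<delta>: "\<delta> > 0" using al unfolding \<delta>_def by simp
  define M where "M = (3 + 2 * \<alpha>) / \<delta>"
  have M: "M \<ge> 0" "M * \<delta> = 3 + 2 * \<alpha>" using \<delta> al unfolding M_def by auto
  define P where "P k = (real k - 1)^2 * D k + (real k + \<alpha> - 2)^2 * w k" for k
  define R where "R k = M * E k + P k + real k * D k" for k
  have Pstep: "P (Suc k) + 2 * (\<alpha> - 1) * real k * D (Suc k) \<le> P k + (2 * real k + 2 * \<alpha> - 3) * w k"
    if k: "k \<ge> 2" for k
  proof -
    define m where "m = (real k + \<alpha> - 1)^2"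
    have pos: "real k + \<alpha> - 1 > 0" using al by simp
    have mb: "m * ((real k - 1) / (real k + \<alpha> - 1))^2 = (real k - 1)^2"
      unfolding m_def using pos by (simp add: power_divide)
    have m0: "m \<ge> 0" unfolding m_def by simp
    have "m * w (Suc k) + m * D (Suc k) = m * (w (Suc k) + D (Suc k))" by (simp add: distrib_left)
    also have "\<dots> \<le> m * (w k + ((real k - 1) / (real k + \<alpha> - 1))^2 * D k)"
      using A[OF k] m0 by (rule mult_left_mono)
    also have "\<dots> = m * w k + (real k - 1)^2 * D k"
      by (simp only: distrib_left mult.assoc[symmetric] mb)
    finally have 1: "m * w (Suc k) + m * D (Suc k) \<le> m * w k + (real k - 1)^2 * D k" .
    have m1: "m = (real k)^2 + 2 * (\<alpha> - 1) * real k + (\<alpha> - 1)^2" unfolding m_def by (simp add: power2_eq_square algebra_simps)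
    have m2: "m = (real k + \<alpha> - 2)^2 + (2 * real k + 2 * \<alpha> - 3)" unfolding m_def by (simp add: power2_eq_square algebra_simps)
    have d1: "m * D (Suc k) \<ge> (real k)^2 * D (Suc k) + 2 * (\<alpha> - 1) * real k * D (Suc k)"
    proof -
      have "m * D (Suc k) = (real k)^2 * D (Suc k) + 2 * (\<alpha> - 1) * real k * D (Suc k) + (\<alpha> - 1)^2 * D (Suc k)"
        unfolding m1 by (simp add: algebra_simps)
      moreover have "(\<alpha> - 1)^2 * D (Suc k) \<ge> 0" using Dn[of "Suc k"] k by simp
      ultimately show ?thesis by linarith
    qed
    have d2: "m * w k = (real k + \<alpha> - 2)^2 * w k + (2 * real k + 2 * \<alpha> - 3) * w k"
      unfolding m2 by (simp add: algebra_simps)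
    have PS: "P (Suc k) = (real k)^2 * D (Suc k) + m * w (Suc k)"
      unfolding P_def m_def by (simp add: algebra_simps)
    show ?thesis using 1 d1 d2 PS unfolding P_def by linarith
  qed
  have Rstep: "R (Suc k) + real k * (w k + D k) \<le> R k" if k: "k \<ge> 2" for k
  proof -
    have e1: "M * E (Suc k) + (3 + 2 * \<alpha>) * real k * w k \<le> M * E k"
    proof -
      have "M * (E (Suc k) + \<delta> * real k * w k) \<le> M * E k"
        using Es[OF k] M(1) unfolding \<delta>_def[symmetric] by (rule mult_left_mono)
      then have "M * E (Suc k) + (M * \<delta>) * real k * w k \<le> M * E k" by (simp add: distrib_left mult.assoc)
      then show ?thesis by (simp only: M(2))
    qed
    have f1: "(2 * \<alpha> * real k - 2 * \<alpha> + 3) * w k \<ge> 0"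
    proof -
      have "\<alpha> * 1 \<le> \<alpha> * real k" using al k by (intro mult_left_mono) auto
      then have "2 * \<alpha> * real k - 2 * \<alpha> + 3 \<ge> 0" by linarith
      then show ?thesis using wn[OF k] by (rule mult_nonneg_nonneg)
    qed
    have f2: "(2 * (\<alpha> - 1) * real k - (real k + 1)) * D (Suc k) \<ge> 0"
    proof -
      have "2 * (\<alpha> - 1) * real k \<ge> 4 * real k" using al by (intro mult_right_mono) auto
      moreover have "real k \<ge> 2" using k by simp
      ultimately have "2 * (\<alpha> - 1) * real k - (real k + 1) \<ge> 0" by linarith
      moreover have "D (Suc k) \<ge> 0" using Dn[of "Suc k"] k by simp
      ultimately show ?thesis by (rule mult_nonneg_nonneg)
    qed
    have RS: "R (Suc k) = M * E (Suc k) + P (Suc k) + (real k + 1) * D (Suc k)"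
      unfolding R_def by simp
    show ?thesis using Pstep[OF k] e1 f1 f2 RS unfolding R_def
      by (simp add: algebra_simps)
  qed
  have Rnn: "R k \<ge> 0" if k: "k \<ge> 2" for k
  proof -
    have "M * E k \<ge> 0" using M(1) En[OF k] by simp
    moreover have "P k \<ge> 0" unfolding P_def using Dn[OF k] wn[OF k] by simp
    moreover have "real k * D k \<ge> 0" using Dn[OF k] by simp
    ultimately show ?thesis unfolding R_def by simp
  qed
  define W where "W k = w k + D k" for k
  have sumb: "(\<Sum>n<N. (real n + 2) * W (n+2)) + R (N+2) \<le> R 2" for N
  proof (induction N)
    case 0 show ?case by (simp add: numeral_2_eq_2)
  next
    case (Suc N)
    have "R (Suc (N+2)) + real (N+2) * (w (N+2) + D (N+2)) \<le> R (N+2)" by (rule Rstep) simp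
    then show ?case using Suc unfolding W_def by (simp add: add.commute)
  qed
  have Wn: "W k \<ge> 0" if "k \<ge> 2" for k using wn[OF that] Dn[OF that] unfolding W_def by simp
  have sm: "summable (\<lambda>n. (real n + 2) * W (n+2))"
  proof (rule summableI_nonneg_bounded)
    show "\<And>n. 0 \<le> (real n + 2) * W (n+2)" using Wn by simp
    show "(\<Sum>i<n. (real i + 2) * W (i+2)) \<le> R 2" for n using sumb[of n] Rnn[of "n+2"] by simp
  qed
  define G where "G n = W (n+2)" for n
  have Gn: "G n \<ge> 0" for n using Wn unfolding G_def by simp
  have Gd: "G (Suc n) \<le> G n" for n
  proof -
    define k where "k = n + 2"
    have k: "k \<ge> 2" unfolding k_def by simp
    have b0: "0 \<le> (real k - 1) / (real k + \<alpha> - 1)" using k al by simp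
    have b1: "(real k - 1) / (real k + \<alpha> - 1) \<le> 1" using k al by simp
    have "((real k - 1) / (real k + \<alpha> - 1))^2 \<le> 1" using b0 b1 by (rule power_le_one)
    then have "((real k - 1) / (real k + \<alpha> - 1))^2 * D k \<le> 1 * D k"
      using Dn[OF k] by (rule mult_right_mono)
    then have "W (Suc k) \<le> W k" using A[OF k] unfolding W_def by simp
    then show ?thesis unfolding G_def k_def by simp
  qed
  have sm2: "summable (\<lambda>n. real n * G n)"
    by (rule summable_comparison_test'[OF sm, of 0]) (use Gn in \<open>auto simp: G_def intro!: mult_right_mono\<close>)
  have t0: "(\<lambda>n. (real n)^2 * G n) \<longlonglongrightarrow> 0" by (rule tail0[OF Gn Gd sm2])
  have t9: "(\<lambda>n. 9 * ((real n)^2 * G n)) \<longlonglongrightarrow> 0" using tendsto_mult_right_zero[OF t0, of 9] by simp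
  have "(\<lambda>n. (real n + 2)^2 * G n) \<longlonglongrightarrow> 0"
  proof (rule tendsto_sandwich[OF _ _ tendsto_const t9])
    show "\<forall>\<^sub>F n in sequentially. 0 \<le> (real n + 2)^2 * G n" using Gn by simp
    show "\<forall>\<^sub>F n in sequentially. (real n + 2)^2 * G n \<le> 9 * ((real n)^2 * G n)"
      unfolding eventually_sequentially
    proof (intro exI allI impI)
      fix n :: nat assume n: "1 \<le> n"
      have "real n + 2 \<le> 3 * real n" using n by simp
      then have "(real n + 2)^2 \<le> (3 * real n)^2" by (rule power_mono) simp
      then have "(real n + 2)^2 * G n \<le> (3 * real n)^2 * G n" using Gn by (rule mult_right_mono)
      then show "(real n + 2)^2 * G n \<le> 9 * ((real n)^2 * G n)" by (simp add: power_mult_distrib)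
    qed
  qed
  then show ?thesis unfolding G_def W_def by simp
qed


lemma comb_alg:
  fixes T s tu tk ts EA EB EE QQ PP :: real
  assumes T: "T \<ge> 1" and s: "s > 0"
    and A: "tu \<le> tk + EA / s + EE / (2 * s)"
    and B: "tu \<le> ts + EB / s + EE / (2 * s)"
    and PP: "PP = QQ + 2 * T * ((T - 1) * EA + EB) + T^2 * EE"
  shows "T^2 * (tu - ts) + QQ / (2 * s) \<le> T * (T - 1) * (tk - ts) + PP / (2 * s)"
proof -
  have A2: "2 * s * tu \<le> 2 * s * tk + 2 * EA + EE"
  proof -
    have "2 * s * tu \<le> 2 * s * (tk + EA / s + EE / (2 * s))" using A s by simp
    also have "\<dots> = 2 * s * tk + 2 * EA + EE" using s by (simp add: field_simps)
    finally show ?thesis .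
  qed
  have B2: "2 * s * tu \<le> 2 * s * ts + 2 * EB + EE"
  proof -
    have "2 * s * tu \<le> 2 * s * (ts + EB / s + EE / (2 * s))" using B s by simp
    also have "\<dots> = 2 * s * ts + 2 * EB + EE" using s by (simp add: field_simps)
    finally show ?thesis .
  qed
  have A3: "(T * (T - 1)) * (2 * s * tu) \<le> (T * (T - 1)) * (2 * s * tk + 2 * EA + EE)"
    using A2 T by (intro mult_left_mono) auto
  have B3: "T * (2 * s * tu) \<le> T * (2 * s * ts + 2 * EB + EE)"
    using B2 T by (intro mult_left_mono) auto
  have "2 * s * (T^2 * (tu - ts) + QQ / (2 * s)) \<le> 2 * s * (T * (T - 1) * (tk - ts) + PP / (2 * s))"
  proof -
    have l: "2 * s * (T^2 * (tu - ts) + QQ / (2 * s)) = (T * (T - 1)) * (2 * s * tu) + T * (2 * s * tu) - 2 * s * T^2 * ts + QQ"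
      using s by (simp add: field_simps power2_eq_square)
    have r: "2 * s * (T * (T - 1) * (tk - ts) + PP / (2 * s)) = (T * (T - 1)) * (2 * s * tk + 2 * EA + EE) + T * (2 * s * ts + 2 * EB + EE) - 2 * s * T^2 * ts + QQ"
      using s unfolding PP by (simp add: field_simps power2_eq_square)
    show ?thesis unfolding l r using A3 B3 by linarith
  qed
  then show ?thesis using s by simp
qed


theorem lemma1:
  fixes \<Psi> :: "'a::{real_inner, complete_space} \<Rightarrow> ereal"
    and \<Phi> :: "'a \<Rightarrow> real"
    and grad\<Phi> :: "'a \<Rightarrow> 'a"
    and L \<alpha> s :: real
    and x :: "nat \<Rightarrow> 'a"
    and xstar :: 'a
  assumes proper: "proper_fun \<Psi>"
    and lsc: "lsc_fun \<Psi>"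
    and convPsi: "convex_ereal_fun \<Psi>"
    and convPhi: "convex_on UNIV \<Phi>"
    and grad: "\<And>z. (\<Phi> has_derivative (\<lambda>h. grad\<Phi> z \<bullet> h)) (at z)"
    and grad_cont: "continuous_on UNIV grad\<Phi>"
    and L_pos: "L > 0"
    and lip: "\<And>u v. norm (grad\<Phi> u - grad\<Phi> v) \<le> L * norm (u - v)"
    and argmin_ne: "\<exists>z. \<forall>w. \<Psi> z + ereal (\<Phi> z) \<le> \<Psi> w + ereal (\<Phi> w)"
    and alpha: "\<alpha> > 3"
    and s_pos: "0 < s" and s_lt: "s < 1 / L"
    and iter: "\<And>k. k \<ge> 1 \<Longrightarrow>
       is_prox s \<Psi>
         ((x k + ((real k - 1) / (real k + \<alpha> - 1)) *\<^sub>R (x k - x (k - 1)))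
           - s *\<^sub>R grad\<Phi> (x k + ((real k - 1) / (real k + \<alpha> - 1)) *\<^sub>R (x k - x (k - 1))))
         (x (Suc k))"
    and xstar: "\<forall>w. \<Psi> xstar + ereal (\<Phi> xstar) \<le> \<Psi> w + ereal (\<Phi> w)"
  shows "\<exists>l::real.
     ((\<lambda>k. ereal ((real k)^2 * (norm (x (Suc k) - x k))^2)
            + ereal ((real k + 1)^2)
              * ((\<Psi> (x (Suc k)) + ereal (\<Phi> (x (Suc k)))) - (\<Psi> xstar + ereal (\<Phi> xstar))))
      \<longlongrightarrow> ereal l) sequentially"
proof -
  define \<psi> where "\<psi> w = real_of_ereal (\<Psi> w)" for w
  define th where "th w = \<psi> w + \<Phi> w" for w
  define yk where "yk k = x k + ((real k - 1) / (real k + \<alpha> - 1)) *\<^sub>R (x k - x (k - 1))" for k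
  have ninf: "\<And>w. \<Psi> w \<noteq> -\<infinity>" using proper unfolding proper_fun_def by auto
  have fin_eq: "\<Psi> w = ereal (\<psi> w)" if "\<Psi> w \<noteq> \<infinity>" for w
    using that ninf[of w] unfolding \<psi>_def by (cases "\<Psi> w") auto
  have fin: "\<Psi> (x k) \<noteq> \<infinity>" if k: "k \<ge> 2" for k
  proof -
    obtain j where j: "k = Suc j" "j \<ge> 1" using k by (cases k) auto
    show ?thesis unfolding j(1) by (rule prox_fin[OF proper iter[OF j(2)]])
  qed
  have finstar: "\<Psi> xstar \<noteq> \<infinity>"
  proof
    assume h: "\<Psi> xstar = \<infinity>"
    from proper obtain v where v: "\<Psi> v \<noteq> \<infinity>" unfolding proper_fun_def by auto
    from xstar[rule_format, of v] h fin_eq[OF v] show False by simp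
  qed
  have S: "th (x (Suc k)) \<le> th v + ((yk k - x (Suc k)) \<bullet> (x (Suc k) - v)) / s
             + (norm (yk k - x (Suc k)))^2 / (2 * s)" if k: "k \<ge> 1" and v: "\<Psi> v \<noteq> \<infinity>" for k v
  proof -
    have "is_prox s \<Psi> (yk k - s *\<^sub>R grad\<Phi> (yk k)) (x (Suc k))" using iter[OF k] unfolding yk_def .
    from step_ineq[OF proper convPsi convPhi grad lip L_pos s_pos s_lt this v]
    show ?thesis unfolding th_def \<psi>_def .
  qed
  define ts where "ts = th xstar"
  have wmin: "ts \<le> th (x k)" if k: "k \<ge> 2" for k
    using xstar[rule_format, of "x k"] fin_eq[OF fin[OF k]] fin_eq[OF finstar]
    unfolding ts_def th_def by simp
  define w where "w k = th (x k) - ts" for k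
  define D where "D k = (norm (x k - x (k - 1)))^2 / (2 * s)" for k
  define tt where "tt k = (real k + \<alpha> - 2) / (\<alpha> - 1)" for k
  define V where "V k = x k + (tt k - 1) *\<^sub>R (x k - x (k - 1)) - xstar" for k
  define E where "E k = (tt k)^2 * w k + (norm (V k))^2 / (2 * s)" for k
  have wn: "w k \<ge> 0" if "k \<ge> 2" for k using wmin[OF that] unfolding w_def by simp
  have Dn: "D k \<ge> 0" for k unfolding D_def using s_pos by simp
  have En: "E k \<ge> 0" if "k \<ge> 2" for k unfolding E_def using wn[OF that] s_pos by simp
  have A: "w (Suc k) + D (Suc k) \<le> w k + ((real k - 1) / (real k + \<alpha> - 1))^2 * D k"
    if k: "k \<ge> 2" for k
  proof -
    define \<beta> where "\<beta> = (real k - 1) / (real k + \<alpha> - 1)"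
    define a where "a = yk k - x k"
    define b where "b = x (Suc k) - x k"
    have 1: "th (x (Suc k)) \<le> th (x k) + ((a - b) \<bullet> b) / s + (norm (a - b))^2 / (2 * s)"
      using S[of k "x k"] k fin[OF k] unfolding a_def b_def by simp
    have id: "2 * ((a - b) \<bullet> b) + (norm (a - b))^2 = (norm a)^2 - (norm b)^2"
      unfolding power2_norm_eq_inner by (simp add: inner_diff_left inner_diff_right inner_commute)
    have na: "(norm a)^2 = \<beta>^2 * (norm (x k - x (k - 1)))^2"
    proof -
      have "a = \<beta> *\<^sub>R (x k - x (k - 1))" unfolding a_def yk_def \<beta>_def by simp
      then show ?thesis by (simp only: norm_scaleR power_mult_distrib power2_abs)
    qed
    have "((a - b) \<bullet> b) / s + (norm (a - b))^2 / (2 * s) = ((norm a)^2 - (norm b)^2) / (2 * s)"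
      using s_pos id[symmetric] by (simp add: field_simps)
    with 1 have "th (x (Suc k)) + (norm b)^2 / (2 * s) \<le> th (x k) + (norm a)^2 / (2 * s)"
      by (simp add: diff_divide_distrib)
    then show ?thesis unfolding w_def D_def na \<beta>_def[symmetric] b_def by simp
  qed
  have Es: "E (Suc k) + (\<alpha> - 3) / (\<alpha> - 1)^2 * real k * w k \<le> E k" if k: "k \<ge> 2" for k
  proof -
    define T where "T = tt (Suc k)"
    define u where "u = x (Suc k)"
    define e where "e = yk k - u"
    define q where "q = V (Suc k)"
    have al1: "\<alpha> - 1 > 0" using alpha by simp
    have T1: "T \<ge> 1" unfolding T_def tt_def using al1 alpha by (simp add: field_simps)
    have q: "q = (T - 1) *\<^sub>R (u - x k) + (u - xstar)"
      unfolding q_def V_def T_def u_def by (simp add: algebra_simps)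
    have Tb: "T * ((real k - 1) / (real k + \<alpha> - 1)) = tt k - 1"
    proof -
      have n1: "real k + \<alpha> - 1 \<noteq> 0" using alpha by simp
      have n2: "\<alpha> - 1 \<noteq> 0" using alpha by simp
      have Teq: "T = (real k + \<alpha> - 1) / (\<alpha> - 1)" unfolding T_def tt_def by (simp add: algebra_simps)
      have "T * ((real k - 1) / (real k + \<alpha> - 1)) = (real k - 1) / (\<alpha> - 1)"
      proof -
        have gen: "\<And>a c d::real. c \<noteq> 0 \<Longrightarrow> c / d * (a / c) = a / d" by (simp add: field_simps)
        show ?thesis unfolding Teq by (rule gen[OF n1])
      qed
      also have "\<dots> = tt k - 1" unfolding tt_def using n2 by (simp add: field_simps)
      finally show ?thesis .
    qed
    have p: "V k = q + T *\<^sub>R e"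
    proof -
      have "q + T *\<^sub>R e = T *\<^sub>R yk k - (T - 1) *\<^sub>R x k - xstar"
        unfolding q e_def by (simp add: algebra_simps)
      also have "T *\<^sub>R yk k = T *\<^sub>R x k + (tt k - 1) *\<^sub>R (x k - x (k - 1))"
        unfolding yk_def Tb[symmetric] by (simp add: algebra_simps)
      finally show ?thesis unfolding V_def by (simp add: algebra_simps)
    qed
    have PP: "(norm (V k))^2 = (norm q)^2 + 2 * T * ((T - 1) * (e \<bullet> (u - x k)) + e \<bullet> (u - xstar)) + T^2 * (norm e)^2"
    proof -
      have "(norm (V k))^2 = (norm q)^2 + 2 * T * (e \<bullet> q) + T^2 * (norm e)^2"
        unfolding p power2_norm_eq_inner
        by (simp add: inner_add_left inner_add_right inner_commute power2_eq_square algebra_simps)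
      moreover have "e \<bullet> q = (T - 1) * (e \<bullet> (u - x k)) + e \<bullet> (u - xstar)"
        unfolding q by (simp add: inner_add_right)
      ultimately show ?thesis by simp
    qed
    have k1: "k \<ge> 1" using k by simp
    have cA: "th u \<le> th (x k) + (e \<bullet> (u - x k)) / s + (norm e)^2 / (2 * s)"
      using S[OF k1 fin[OF k]] unfolding e_def u_def .
    have cB: "th u \<le> ts + (e \<bullet> (u - xstar)) / s + (norm e)^2 / (2 * s)"
      using S[OF k1 finstar] unfolding e_def u_def ts_def .
    have main: "T^2 * (th u - ts) + (norm q)^2 / (2 * s) \<le> T * (T - 1) * (th (x k) - ts) + (norm (V k))^2 / (2 * s)"
      by (rule comb_alg[OF T1 s_pos cA cB PP])
    have coef: "(tt k)^2 - T * (T - 1) = (real k * (\<alpha> - 3) + (\<alpha> - 2)^2) / (\<alpha> - 1)^2"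
    proof -
      have gen: "\<And>a b c::real. c \<noteq> 0 \<Longrightarrow> (a / c)^2 - (b / c) * ((b / c) - 1) = (a^2 - b * (b - c)) / c^2"
        by (simp add: field_simps power2_eq_square)
      have Teq: "T = (real k + \<alpha> - 1) / (\<alpha> - 1)" unfolding T_def tt_def by (simp add: algebra_simps)
      have num: "(real k + \<alpha> - 2)^2 - (real k + \<alpha> - 1) * ((real k + \<alpha> - 1) - (\<alpha> - 1)) = real k * (\<alpha> - 3) + (\<alpha> - 2)^2"
        by (simp add: power2_eq_square algebra_simps)
      show ?thesis unfolding Teq tt_def gen[of "\<alpha> - 1", OF al1[THEN less_imp_neq, symmetric]] num ..
    qed
    have coef2: "(tt k)^2 - T * (T - 1) \<ge> (\<alpha> - 3) / (\<alpha> - 1)^2 * real k"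
    proof -
      have "(real k * (\<alpha> - 3) + (\<alpha> - 2)^2) / (\<alpha> - 1)^2 \<ge> (real k * (\<alpha> - 3)) / (\<alpha> - 1)^2"
        using al1 by (intro divide_right_mono) auto
      then show ?thesis unfolding coef by (simp add: mult.commute)
    qed
    have "((\<alpha> - 3) / (\<alpha> - 1)^2 * real k) * w k \<le> ((tt k)^2 - T * (T - 1)) * w k"
      using coef2 wn[OF k] by (rule mult_right_mono)
    then have c3: "(\<alpha> - 3) / (\<alpha> - 1)^2 * real k * w k + T * (T - 1) * w k \<le> (tt k)^2 * w k"
      by (simp add: algebra_simps)
    have "E (Suc k) = T^2 * (th u - ts) + (norm q)^2 / (2 * s)"
      unfolding E_def T_def q_def u_def w_def by simp
    then show ?thesis using main c3 unfolding E_def w_def by linarith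
  qed
  have lim: "(\<lambda>n. (real n + 2)^2 * (w (n+2) + D (n+2))) \<longlonglongrightarrow> 0"
    by (rule seq_core[OF alpha wn Dn En A Es])
  define F where "F k = (real k)^2 * (norm (x (Suc k) - x k))^2 + (real k + 1)^2 * w (Suc k)" for k
  have Fb: "0 \<le> F (n + 1) \<and> F (n + 1) \<le> (2 * s + 1) * ((real n + 2)^2 * (w (n+2) + D (n+2)))" for n
  proof -
    have w0: "w (n+2) \<ge> 0" using wn[of "n+2"] by simp
    have D0: "D (n+2) \<ge> 0" using Dn by simp
    have nD: "(norm (x (n+2) - x (n+1)))^2 = 2 * s * D (n+2)" unfolding D_def using s_pos by simp
    have F1: "F (n + 1) = (real n + 1)^2 * (2 * s * D (n+2)) + (real n + 2)^2 * w (n+2)"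
      unfolding F_def nD[symmetric] by (simp add: add.commute numeral_2_eq_2)
    have sq: "(real n + 1)^2 \<le> (real n + 2)^2" by (rule power_mono) auto
    have a1: "(real n + 1)^2 * (2 * s * D (n+2)) \<le> (real n + 2)^2 * (2 * s * D (n+2))"
      using sq s_pos D0 by (intro mult_right_mono) auto
    have a2: "(real n + 2)^2 * w (n+2) \<le> (real n + 2)^2 * w (n+2) + (real n + 2)^2 * (2 * s * w (n+2))"
      using s_pos w0 by simp
    have a3: "(real n + 2)^2 * (2 * s * D (n+2)) \<le> (real n + 2)^2 * (2 * s * D (n+2)) + (real n + 2)^2 * D (n+2)"
      using D0 by simp
    have "F (n + 1) \<le> (real n + 2)^2 * (2 * s * D (n+2)) + (real n + 2)^2 * D (n+2)
        + ((real n + 2)^2 * w (n+2) + (real n + 2)^2 * (2 * s * w (n+2)))"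
      using F1 a1 a2 a3 by linarith
    also have "\<dots> = (2 * s + 1) * ((real n + 2)^2 * (w (n+2) + D (n+2)))" by (simp add: algebra_simps)
    finally have up: "F (n + 1) \<le> (2 * s + 1) * ((real n + 2)^2 * (w (n+2) + D (n+2)))" .
    have "0 \<le> F (n + 1)" unfolding F1 using s_pos w0 D0 by simp
    with up show ?thesis by simp
  qed
  have "(\<lambda>n. F (n + 1)) \<longlonglongrightarrow> 0"
  proof (rule tendsto_sandwich[OF _ _ tendsto_const])
    show "\<forall>\<^sub>F n in sequentially. 0 \<le> F (n + 1)" using Fb by simp
    show "\<forall>\<^sub>F n in sequentially. F (n + 1) \<le> (2 * s + 1) * ((real n + 2)^2 * (w (n+2) + D (n+2)))"
      using Fb by simp
    show "(\<lambda>n. (2 * s + 1) * ((real n + 2)^2 * (w (n+2) + D (n+2)))) \<longlonglongrightarrow> 0"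
      using tendsto_mult_right_zero[OF lim, of "2 * s + 1"] by simp
  qed
  then have "F \<longlonglongrightarrow> 0" by (rule LIMSEQ_offset)
  then have L0: "(\<lambda>k. ereal (F k)) \<longlonglongrightarrow> ereal 0" by (rule tendsto_ereal)
  have ev: "\<forall>\<^sub>F k in sequentially. ereal (F k) =
       ereal ((real k)^2 * (norm (x (Suc k) - x k))^2)
            + ereal ((real k + 1)^2)
              * ((\<Psi> (x (Suc k)) + ereal (\<Phi> (x (Suc k)))) - (\<Psi> xstar + ereal (\<Phi> xstar)))"
    unfolding eventually_sequentially
  proof (intro exI allI impI)
    fix k :: nat assume k: "1 \<le> k"
    have f1: "\<Psi> (x (Suc k)) = ereal (\<psi> (x (Suc k)))" using fin[of "Suc k"] k fin_eq by simp
    have f2: "\<Psi> xstar = ereal (\<psi> xstar)" using fin_eq[OF finstar] .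
    show "ereal (F k) = ereal ((real k)^2 * (norm (x (Suc k) - x k))^2)
            + ereal ((real k + 1)^2)
              * ((\<Psi> (x (Suc k)) + ereal (\<Phi> (x (Suc k)))) - (\<Psi> xstar + ereal (\<Phi> xstar)))"
      unfolding f1 f2 F_def w_def th_def ts_def by simp
  qed
  show ?thesis by (rule exI[of _ 0]) (rule Lim_transform_eventually[OF L0 ev])
qed

end
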